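(* Under the standing assumptions below, let $k\in\{0,\dots,n-1\}$. If $c\in I$ and $x_{k+1}\notin\mathrm{var}(c)$, then $I_{k+1}(c)=I_k(c)$. Moreover, writing $I(x_{k+1})=\{c_1,\dots,c_m\}$ with $c_1\prec c_2\prec\dots\prec c_m$, we have $I_{k+1}(c_1)=I_k(c_1)$ and, for every $i<m$, $I_{k+1}(c_{i+1})=I_k(c_{i+1})\cup I_{k+1}(c_i)$.
   Context: Standing assumptions: $I$ is a finite set of weighted constraints with default values on a finite domain $D$ such that distinct constraints have distinct variable sets, $\mathcal H(I)=(\mathrm{var}(I),\{\mathrm{var}(c)\mid c\in I\})$ is $\beta$-acyclic, and $(x_1,\dots,x_n)$ is a $\beta$-elimination order of $\mathcal H(I)$ (an enumeration of $\mathrm{var}(I)$ such that for each $k$, $x_{k+1}$ is a nest point—the edges containing it are totally ordered by inclusion—of the hypergraph with vertices $\mathrm{var}(I)\setminus X_k$ and edges $\{e\setminus X_k\}\setminus\{\emptyset\}$). $X_k=\{x_1,\dots,x_k\}$. For $c,d\in I$: $c\prec d$ iff there is $k$ with $\mathrm{var}(c)\setminus X_k\subsetneq\mathrm{var}(d)\setminus X_k$ (this is a total order); $c\preceq d$ iff $c\prec d$ or $c=d$. Relations $\prec_k$ are defined inductively: $\prec_0=\emptyset$; $c\prec_{k+1}d$ iff $c\prec_k d$ or there is $e\in I$ with $c\preceq_k e\prec d$ and $x_{k+1}\in\mathrm{var}(d)\cap\mathrm{var}(e)$; here $c\preceq_k d$ iff $c=d$ or $c\prec_k d$. For $c\in I$,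 $I_k(c)=\{d\in I\mid d\preceq_k c\}$. For a variable $x$, $I(x)=\{c\in I\mid x\in\mathrm{var}(c)\}$. *)

theory Defs
  imports Main
begin

definition nest_point :: "'v set \<Rightarrow> 'v set set \<Rightarrow> 'v \<Rightarrow> bool" where
  "nest_point V E x \<longleftrightarrow> x \<in> V \<and>
     (\<forall>e1\<in>E. \<forall>e2\<in>E. x \<in> e1 \<and> x \<in> e2 \<longrightarrow> e1 \<subseteq> e2 \<or> e2 \<subseteq> e1)"

definition beta_elim_order :: "'v set \<Rightarrow> 'v set set \<Rightarrow> 'v list \<Rightarrow> bool" where
  "beta_elim_order V E xs \<longleftrightarrow> distinct xs \<and> set xs = V \<and>
     (\<forall>k < length xs.
        nest_point (V - set (take k xs))
                   ((\<lambda>e. e - set (take k xs)) ` E - {{}}) (xs ! k))"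

definition Xk :: "'v list \<Rightarrow> nat \<Rightarrow> 'v set" where
  "Xk xs k = set (take k xs)"

definition prec :: "('c \<Rightarrow> 'v set) \<Rightarrow> 'v list \<Rightarrow> 'c \<Rightarrow> 'c \<Rightarrow> bool" where
  "prec var xs c d \<longleftrightarrow> (\<exists>k. var c - Xk xs k \<subset> var d - Xk xs k)"

text \<open>c \<prec>_k d (the relation for index k); xs ! k is x_{k+1}\<close>
fun prec_k :: "'c set \<Rightarrow> ('c \<Rightarrow> 'v set) \<Rightarrow> 'v list \<Rightarrow> nat \<Rightarrow> 'c \<Rightarrow> 'c \<Rightarrow> bool" where
  "prec_k I var xs 0 c d = False"
| "prec_k I var xs (Suc k) c d \<longleftrightarrow> prec_k I var xs k c d \<or>
     (\<exists>e\<in>I. (c = e \<or> prec_k I var xs k c e) \<and> prec var xs e d \<and>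
             xs ! k \<in> var d \<inter> var e)"

definition Ik :: "'c set \<Rightarrow> ('c \<Rightarrow> 'v set) \<Rightarrow> 'v list \<Rightarrow> nat \<Rightarrow> 'c \<Rightarrow> 'c set" where
  "Ik I var xs k c = {d \<in> I. d = c \<or> prec_k I var xs k d c}"

end

theory Submission
  imports Defs
begin

lemma prec_irrefl: "\<not> prec var xs c c"
  unfolding prec_def by auto

lemma prec_asym:
  assumes "prec var xs c d" shows "\<not> prec var xs d c"
proof
  assume "prec var xs d c"
  then obtain j where j: "var d - Xk xs j \<subset> var c - Xk xs j" unfolding prec_def by auto
  from assms obtain k where k: "var c - Xk xs k \<subset> var d - Xk xs k" unfolding prec_def by auto
  show False
  proof (cases "k \<le> j")
    case True
    then have "Xk xs k \<subseteq> Xk xs j" unfolding Xk_def by (simp add: set_take_subset_set_take)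
    then have "var c - Xk xs j \<subseteq> var d - Xk xs j" using k by blast
    then show False using j by blast
  next
    case False
    then have "Xk xs j \<subseteq> Xk xs k" unfolding Xk_def by (simp add: set_take_subset_set_take)
    then have "var d - Xk xs k \<subseteq> var c - Xk xs k" using j by blast
    then show False using k by blast
  qed
qed

lemma before:
  assumes s: "sorted_wrt (prec var xs) cs" and e: "e \<in> set cs" and i: "i < length cs"
    and p: "prec var xs e (cs ! i)"
  shows "\<exists>j<i. e = cs ! j"
proof -
  obtain j where j: "j < length cs" "e = cs ! j" using e by (auto simp: in_set_conv_nth)
  have "j < i"
  proof (rule ccontr)
    assume "\<not> j < i"
    then consider "j = i" | "i < j" by linarith
    then show False
    proof cases
      case 1 then show ?thesis using p j prec_irrefl by metis
    next
      case 2
      then have "prec var xs (cs ! i) (cs ! j)" using s j by (simp add: sorted_wrt_iff_nth_less)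
      then show ?thesis using p j prec_asym by metis
    qed
  qed
  then show ?thesis using j by blast
qed

theorem lemma7:
  fixes I :: "'c set" and var :: "'c \<Rightarrow> 'v set" and xs :: "'v list" and k :: nat
  assumes finI: "finite I"
    and fin_scopes: "\<forall>c\<in>I. finite (var c)"
    and distinct_scopes: "inj_on var I"
    and elim: "beta_elim_order (\<Union>(var ` I)) (var ` I) xs"
    and k: "k < length xs"
  shows "(\<forall>c\<in>I. xs ! k \<notin> var c \<longrightarrow> Ik I var xs (Suc k) c = Ik I var xs k c)
       \<and> (\<forall>cs. set cs = {c \<in> I. xs ! k \<in> var c} \<and> sorted_wrt (prec var xs) cs \<longrightarrow>
            Ik I var xs (Suc k) (cs ! 0) = Ik I var xs k (cs ! 0)
          \<and> (\<forall>i. Suc i < length cs \<longrightarrow>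
               Ik I var xs (Suc k) (cs ! Suc i) = Ik I var xs k (cs ! Suc i) \<union> Ik I var xs (Suc k) (cs ! i)))"
proof (intro conjI allI impI ballI)
  fix c assume "c \<in> I" "xs ! k \<notin> var c"
  then show "Ik I var xs (Suc k) c = Ik I var xs k c" unfolding Ik_def by auto
next
  fix cs assume a: "set cs = {c \<in> I. xs ! k \<in> var c} \<and> sorted_wrt (prec var xs) cs"
  then have setcs: "set cs = {c \<in> I. xs ! k \<in> var c}" and s: "sorted_wrt (prec var xs) cs" by auto
  have "xs ! k \<in> \<Union>(var ` I)" using elim k unfolding beta_elim_order_def by auto
  then have "set cs \<noteq> {}" using setcs by auto
  then have len: "0 < length cs" by auto
  show "Ik I var xs (Suc k) (cs ! 0) = Ik I var xs k (cs ! 0)"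
  proof -
    have "\<not> (\<exists>e\<in>I. prec var xs e (cs ! 0) \<and> xs ! k \<in> var (cs ! 0) \<inter> var e)"
    proof
      assume "\<exists>e\<in>I. prec var xs e (cs ! 0) \<and> xs ! k \<in> var (cs ! 0) \<inter> var e"
      then obtain e where "e \<in> set cs" "prec var xs e (cs ! 0)" using setcs by auto
      then show False using before[OF s _ len] by blast
    qed
    then show ?thesis unfolding Ik_def by auto
  qed
  fix i assume i: "Suc i < length cs"
  have ci: "cs ! i \<in> set cs" and ci1: "cs ! Suc i \<in> set cs" using i by auto
  then have ciI: "cs ! i \<in> I" "xs ! k \<in> var (cs ! i)" "cs ! Suc i \<in> I" "xs ! k \<in> var (cs ! Suc i)"
    using setcs by auto
  have pii: "prec var xs (cs ! i) (cs ! Suc i)" using s i by (simp add: sorted_wrt_iff_nth_less)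
  show "Ik I var xs (Suc k) (cs ! Suc i) = Ik I var xs k (cs ! Suc i) \<union> Ik I var xs (Suc k) (cs ! i)"
  proof
    show "Ik I var xs (Suc k) (cs ! Suc i) \<subseteq> Ik I var xs k (cs ! Suc i) \<union> Ik I var xs (Suc k) (cs ! i)"
    proof
      fix d assume "d \<in> Ik I var xs (Suc k) (cs ! Suc i)"
      then have dI: "d \<in> I" and "d = cs ! Suc i \<or> prec_k I var xs k d (cs ! Suc i) \<or>
          (\<exists>e\<in>I. (d = e \<or> prec_k I var xs k d e) \<and> prec var xs e (cs ! Suc i) \<and>
             xs ! k \<in> var (cs ! Suc i) \<inter> var e)" unfolding Ik_def by auto
      then consider "d = cs ! Suc i \<or> prec_k I var xs k d (cs ! Suc i)"
        | e where "e \<in> I" "d = e \<or> prec_k I var xs k d e" "prec var xs e (cs ! Suc i)" "xs ! k \<in> var e"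
        by blast
      then show "d \<in> Ik I var xs k (cs ! Suc i) \<union> Ik I var xs (Suc k) (cs ! i)"
      proof cases
        case 1 then show ?thesis using dI unfolding Ik_def by auto
      next
        case 2
        then have "e \<in> set cs" using setcs by auto
        then obtain j where j: "j < Suc i" "e = cs ! j" using before[OF s _ i 2(3)] by blast
        show ?thesis
        proof (cases "j = i")
          case True then show ?thesis using 2 j dI unfolding Ik_def by auto
        next
          case False
          then have "j < i" using j by auto
          then have "prec var xs e (cs ! i)" using s i j by (simp add: sorted_wrt_iff_nth_less)
          then have "prec_k I var xs (Suc k) d (cs ! i)" using 2 ciI by auto
          then show ?thesis using dI unfolding Ik_def by auto
        qed
      qed
    qed
  next
    show "Ik I var xs k (cs ! Suc i) \<union> Ik I var xs (Suc k) (cs ! i) \<subseteq> Ik I var xs (Suc k) (cs ! Suc i)"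
    proof
      fix d assume "d \<in> Ik I var xs k (cs ! Suc i) \<union> Ik I var xs (Suc k) (cs ! i)"
      then consider "d \<in> Ik I var xs k (cs ! Suc i)" | "d \<in> Ik I var xs (Suc k) (cs ! i)" by blast
      then show "d \<in> Ik I var xs (Suc k) (cs ! Suc i)"
      proof cases
        case 1 then show ?thesis unfolding Ik_def by auto
      next
        case 2
        then have dI: "d \<in> I" and "d = cs ! i \<or> prec_k I var xs k d (cs ! i) \<or>
          (\<exists>e\<in>I. (d = e \<or> prec_k I var xs k d e) \<and> prec var xs e (cs ! i) \<and>
             xs ! k \<in> var (cs ! i) \<inter> var e)" unfolding Ik_def by auto
        then consider "d = cs ! i \<or> prec_k I var xs k d (cs ! i)"
          | e where "e \<in> I" "d = e \<or> prec_k I var xs k d e" "prec var xs e (cs ! i)" "xs ! k \<in> var e"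
          by blast
        then show ?thesis
        proof cases
          case 1
          then have "prec_k I var xs (Suc k) d (cs ! Suc i)" using pii ciI by auto
          then show ?thesis using dI unfolding Ik_def by auto
        next
          case 2
          then have "e \<in> set cs" using setcs by auto
          then obtain j where j: "j < i" "e = cs ! j" using before[OF s _ _ 2(3)] i by auto
          then have "prec var xs e (cs ! Suc i)" using s i by (simp add: sorted_wrt_iff_nth_less)
          then have "prec_k I var xs (Suc k) d (cs ! Suc i)" using 2 ciI by auto
          then show ?thesis using dI unfolding Ik_def by auto
        qed
      qed
    qed
  qed
qed

end
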